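(* Fix an iteration $t$, a finite slicing set $\mathcal U=\{u_\ell\}_{\ell=1}^m\subset\mathbb S^{d-1}$ and an index $\ell\in[m]$. Let $h_t=(h_{t,1},\dots,h_{t,m})$ be any HUC vector for $\mathcal U$ at iteration $t$. Let $N_t\sim\mathcal N(0,\Sigma_t)$ be independent of the data and of $R_t$, and suppose $v_{t,\ell}:=u_\ell^\top\Sigma_tu_\ell>0$. Then for every $\alpha>1$, every $\theta\in\Theta$, every $(s_i,s_j)\in\mathcal Q$ with positive prior probabilities and every history $y_{<t}$ in the support, \[ \mathtt D_\alpha\!\left(\mathrm{Law}\big(\langle Y_t,u_\ell\rangle\mid S=s_i,\theta\big)\,\Big\|\,\mathrm{Law}\big(\langle Y_t,u_\ell\rangle\mid S=s_j,\theta\big)\right)\le\frac\alpha2\,\frac{h_{t,\ell}}{v_{t,\ell}}, \] where $Y_t=f_t(X,y_{<t};R_t)+N_t$ with $X\sim\mu^\theta_s$ under secret $s$ and $R_t\sim\mathbb P_{\eta,\rho}$.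
   Context: Pufferfish scenario $(\mathcal S,\mathcal Q,\Theta)$: each $\theta$ a joint law of a secret $S$ and dataset $X\in\bar{\mathcal X}^n$; $\mu^\theta_s$ the law of $X$ given $S=s$ under $\theta$; $\Pi(\mu,\nu)$ couplings. $\mathtt D_\alpha$ is R\'enyi divergence $\frac1{\alpha-1}\log\mathbb E_Q[(dP/dQ)^\alpha]$. At iteration $t$, subsampling randomness $R_t\sim\mathbb P_{\eta,\rho}$ (independent of data and secret) and a history $y_{<t}$ determine a pre-noise update $f_t(x,y_{<t};R_t)\in\mathbb R^d$ (the update map applied to the clipped, averaged minibatch gradient). HUC: $h_t\in\mathbb R^m_+$ is a HUC for $\mathcal U$ at iteration $t$ if for all $\theta\in\Theta$, $(s_i,s_j)\in\mathcal Q$, histories $y_{<t}$ in the support and every coupling $\gamma\in\Pi(\mu^\theta_{s_i},\mu^\theta_{s_j})$, $\gamma\times\mathbb P_{\eta,\rho}$-a.s. in $((X,X'),R_t)$, $|\langle f_t(X,y_{<t};R_t)-f_t(X',y_{<t};R_t),u_\ell\rangle|\le\sqrt{h_{t,\ell}}$ for all $\ell\in[m]$. *)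

theory Defs
  imports "HOL-Probability.Probability"
begin

definition renyi_div :: "real \<Rightarrow> 'a measure \<Rightarrow> 'a measure \<Rightarrow> ereal" where
  "renyi_div \<alpha> P Q =
     (if absolutely_continuous Q P \<and> sets P = sets Q then
        (let I = (\<integral>\<^sup>+ x. ennreal ((enn2real (RN_deriv Q P x)) powr \<alpha>) \<partial>Q) in
          if I = \<infinity> then \<infinity> else ereal (ln (enn2real I) / (\<alpha> - 1)))
      else \<infinity>)"

definition couplings :: "'a measure \<Rightarrow> 'b measure \<Rightarrow> ('a \<times> 'b) measure set" where
  "couplings M N = {\<gamma>. prob_space \<gamma> \<and> sets \<gamma> = sets (M \<Otimes>\<^sub>M N) \<and>
                        distr \<gamma> M fst = M \<and> distr \<gamma> N snd = N}"

definition gaussian_vec :: "(real^'d) measure \<Rightarrow> real^'d^'d \<Rightarrow> bool" where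
  "gaussian_vec N \<Sigma> \<longleftrightarrow> prob_space N \<and> sets N = sets borel \<and>
     (\<forall>w. distr N borel (\<lambda>x. x \<bullet> w) =
            (if w \<bullet> (\<Sigma> *v w) = 0 then return borel 0
             else density lborel (normal_density 0 (sqrt (w \<bullet> (\<Sigma> *v w))))))"

text \<open>Theta: scenario parameters; Q: discriminative pairs;
  prior th s: prior probability of secret s under th; mu th s: law of the dataset given
  S = s under th; Hist: histories in the support; PR: law of the subsampling randomness;
  f x y r: pre-noise update; u: slicing directions u_0..u_{m-1}; h: the HUC vector.\<close>
definition is_HUC ::
  "'th set \<Rightarrow> ('s \<times> 's) set \<Rightarrow> ('th \<Rightarrow> 's \<Rightarrow> real) \<Rightarrow> ('th \<Rightarrow> 's \<Rightarrow> 'x measure) \<Rightarrow>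
   'h set \<Rightarrow> 'r measure \<Rightarrow> ('x \<Rightarrow> 'h \<Rightarrow> 'r \<Rightarrow> real^'d) \<Rightarrow> (nat \<Rightarrow> real^'d) \<Rightarrow> nat \<Rightarrow>
   (nat \<Rightarrow> real) \<Rightarrow> bool" where
  "is_HUC \<Theta> Q prior mu Hist PR f u m h \<longleftrightarrow>
     (\<forall>l<m. 0 \<le> h l) \<and>
     (\<forall>\<theta>\<in>\<Theta>. \<forall>(si, sj)\<in>Q. 0 < prior \<theta> si \<longrightarrow> 0 < prior \<theta> sj \<longrightarrow>
        (\<forall>y\<in>Hist. \<forall>\<gamma>\<in>couplings (mu \<theta> si) (mu \<theta> sj).
           AE z in \<gamma> \<Otimes>\<^sub>M PR. \<forall>l<m.
             \<bar>(f (fst (fst z)) y (snd z) - f (snd (fst z)) y (snd z)) \<bullet> u l\<bar> \<le> sqrt (h l)))"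

end

theory Submission
  imports Defs
begin



lemma nd_pow_identity:
  fixes a b z s \<alpha> :: real
  assumes s: "0 < s"
  shows "normal_density a s z powr \<alpha> * normal_density b s z powr (1 - \<alpha>) =
         exp (\<alpha> * (\<alpha> - 1) * (a - b)\<^sup>2 / (2 * s\<^sup>2)) * normal_density (\<alpha> * a + (1 - \<alpha>) * b) s z"
proof -
  define K where "K = 1 / sqrt (2 * pi * s\<^sup>2)"
  have K: "0 < K" using s by (simp add: K_def)
  have nd: "normal_density c s z = K * exp (-(z - c)\<^sup>2 / (2 * s\<^sup>2))" for c
    by (simp add: normal_density_def K_def)
  have lnd: "ln (normal_density c s z) = ln K - (z - c)\<^sup>2 / (2 * s\<^sup>2)" for c
    using K by (simp add: nd ln_mult)
  have pos: "0 < normal_density c s z" for c using s by (rule normal_density_pos)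
  have "normal_density a s z powr \<alpha> * normal_density b s z powr (1 - \<alpha>)
      = exp (\<alpha> * ln (normal_density a s z) + (1 - \<alpha>) * ln (normal_density b s z))"
    using pos[of a] pos[of b] by (simp add: powr_def exp_add)
  also have "\<alpha> * ln (normal_density a s z) + (1 - \<alpha>) * ln (normal_density b s z)
      = \<alpha> * (\<alpha> - 1) * (a - b)\<^sup>2 / (2 * s\<^sup>2) + (ln K - (z - (\<alpha> * a + (1 - \<alpha>) * b))\<^sup>2 / (2 * s\<^sup>2))"
    unfolding lnd using s by (simp add: field_simps power2_eq_square)
  also have "exp \<dots> = exp (\<alpha> * (\<alpha> - 1) * (a - b)\<^sup>2 / (2 * s\<^sup>2)) * normal_density (\<alpha> * a + (1 - \<alpha>) * b) s z"
    using K by (simp add: exp_add nd exp_diff exp_minus field_simps)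
  finally show ?thesis .
qed

lemma nn_integral_normal_density: "0 < s \<Longrightarrow> (\<integral>\<^sup>+ z. ennreal (normal_density c s z) \<partial>lborel) = 1"
proof -
  assume s: "0 < s"
  interpret prob_space "density lborel (normal_density c s)" using s by (rule prob_space_normal_density)
  have "emeasure (density lborel (normal_density c s)) UNIV = 1"
    using emeasure_space_1 by simp
  then show ?thesis by (simp add: emeasure_density)
qed

lemma gauss_renyi_integral:
  fixes a b s \<alpha> :: real
  assumes s: "0 < s"
  shows "(\<integral>\<^sup>+ z. ennreal (normal_density a s z powr \<alpha> * normal_density b s z powr (1 - \<alpha>)) \<partial>lborel)
       = ennreal (exp (\<alpha> * (\<alpha> - 1) * (a - b)\<^sup>2 / (2 * s\<^sup>2)))"
  using s by (simp add: nd_pow_identity ennreal_mult nn_integral_cmult nn_integral_normal_density)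



lemma tangent_pow:
  fixes s t \<alpha> :: real
  assumes "0 < s" "0 < t" "1 < \<alpha>"
  shows "\<alpha> * t powr (\<alpha> - 1) * s \<le> s powr \<alpha> + (\<alpha> - 1) * t powr \<alpha>"
proof -
  have "s * t powr (\<alpha> - 1) \<le> s powr \<alpha> / \<alpha> + (t powr (\<alpha> - 1)) powr (\<alpha> / (\<alpha> - 1)) / (\<alpha> / (\<alpha> - 1))"
    using assms by (intro Youngs_inequality) (auto simp: field_simps)
  also have "(t powr (\<alpha> - 1)) powr (\<alpha> / (\<alpha> - 1)) = t powr \<alpha>"
    using assms by (simp add: powr_powr)
  finally have "s * t powr (\<alpha> - 1) \<le> s powr \<alpha> / \<alpha> + t powr \<alpha> / (\<alpha> / (\<alpha> - 1))" .
  then have "\<alpha> * (s * t powr (\<alpha> - 1)) \<le> \<alpha> * (s powr \<alpha> / \<alpha> + t powr \<alpha> / (\<alpha> / (\<alpha> - 1)))"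
    using assms by simp
  also have "\<alpha> * (s powr \<alpha> / \<alpha> + t powr \<alpha> / (\<alpha> / (\<alpha> - 1))) = s powr \<alpha> + (\<alpha> - 1) * t powr \<alpha>"
    using assms by (simp add: field_simps)
  finally show ?thesis by (simp add: mult.assoc mult.commute mult.left_commute)
qed

lemma tangent_pow2:
  fixes a b t \<alpha> :: real
  assumes "0 < a" "0 < b" "0 < t" "1 < \<alpha>"
  shows "\<alpha> * t powr (\<alpha> - 1) * a \<le> a powr \<alpha> * b powr (1 - \<alpha>) + (\<alpha> - 1) * t powr \<alpha> * b"
proof -
  have "\<alpha> * t powr (\<alpha> - 1) * (a / b) \<le> (a / b) powr \<alpha> + (\<alpha> - 1) * t powr \<alpha>"
    using assms by (intro tangent_pow) auto
  then have "b * (\<alpha> * t powr (\<alpha> - 1) * (a / b)) \<le> b * ((a / b) powr \<alpha> + (\<alpha> - 1) * t powr \<alpha>)"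
    using assms by (intro mult_left_mono) auto
  moreover have "b * (a / b) powr \<alpha> = a powr \<alpha> * b powr (1 - \<alpha>)"
    using assms by (simp add: powr_divide powr_diff field_simps)
  ultimately show ?thesis using assms by (simp add: field_simps)
qed

lemma mix_convex:
  fixes A B :: "'a \<Rightarrow> real"
  assumes Am: "A \<in> borel_measurable M" and Bm: "B \<in> borel_measurable M"
    and pos: "\<And>x. x \<in> space M \<Longrightarrow> 0 < A x \<and> 0 < B x"
    and al: "1 < \<alpha>"
    and P: "(\<integral>\<^sup>+x. ennreal (A x) \<partial>M) = ennreal p" and Q: "(\<integral>\<^sup>+x. ennreal (B x) \<partial>M) = ennreal q"
    and p: "0 < p" and q: "0 < q"
  shows "ennreal (p powr \<alpha> * q powr (1 - \<alpha>)) \<le> (\<integral>\<^sup>+x. ennreal (A x powr \<alpha> * B x powr (1 - \<alpha>)) \<partial>M)"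
proof -
  define t where "t = p / q"
  have t: "0 < t" using p q by (simp add: t_def)
  have "(\<integral>\<^sup>+x. ennreal (\<alpha> * t powr (\<alpha> - 1)) * ennreal (A x) \<partial>M)
     \<le> (\<integral>\<^sup>+x. ennreal (A x powr \<alpha> * B x powr (1 - \<alpha>)) + ennreal ((\<alpha> - 1) * t powr \<alpha>) * ennreal (B x) \<partial>M)"
  proof (rule nn_integral_mono)
    fix x assume x: "x \<in> space M"
    have "\<alpha> * t powr (\<alpha> - 1) * A x \<le> A x powr \<alpha> * B x powr (1 - \<alpha>) + (\<alpha> - 1) * t powr \<alpha> * B x"
      using pos[OF x] t al by (intro tangent_pow2) auto
    then show "ennreal (\<alpha> * t powr (\<alpha> - 1)) * ennreal (A x)
       \<le> ennreal (A x powr \<alpha> * B x powr (1 - \<alpha>)) + ennreal ((\<alpha> - 1) * t powr \<alpha>) * ennreal (B x)"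
      using pos[OF x] t al
      by (simp add: ennreal_mult'[symmetric] ennreal_plus[symmetric] del: ennreal_plus)
  qed
  also have "\<dots> = (\<integral>\<^sup>+x. ennreal (A x powr \<alpha> * B x powr (1 - \<alpha>)) \<partial>M) + ennreal ((\<alpha> - 1) * t powr \<alpha>) * ennreal q"
    using Am Bm by (simp add: nn_integral_add nn_integral_cmult Q)
  finally have ineq: "ennreal (\<alpha> * t powr (\<alpha> - 1)) * ennreal p
      \<le> (\<integral>\<^sup>+x. ennreal (A x powr \<alpha> * B x powr (1 - \<alpha>)) \<partial>M) + ennreal ((\<alpha> - 1) * t powr \<alpha>) * ennreal q"
    using Am by (simp add: nn_integral_cmult P)
  have key: "p powr \<alpha> * q powr (1 - \<alpha>) = t powr \<alpha> * q"
    using p q by (simp add: t_def powr_divide powr_diff field_simps)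
  have pt: "p = t * q" using q by (simp add: t_def)
  show ?thesis
  proof (cases "(\<integral>\<^sup>+x. ennreal (A x powr \<alpha> * B x powr (1 - \<alpha>)) \<partial>M) = \<infinity>")
    case True then show ?thesis by simp
  next
    case False
    then obtain F where F: "(\<integral>\<^sup>+x. ennreal (A x powr \<alpha> * B x powr (1 - \<alpha>)) \<partial>M) = ennreal F" "0 \<le> F"
      using ennreal_cases by (metis infinity_ennreal_def top_neq_ennreal enn2real_nonneg ennreal_enn2real_if) 
    have "ennreal (\<alpha> * t powr (\<alpha> - 1) * p) \<le> ennreal (F + (\<alpha> - 1) * t powr \<alpha> * q)"
      using ineq F t al p q by (simp add: ennreal_mult'[symmetric] ennreal_plus[symmetric] del: ennreal_plus)
    then have "\<alpha> * t powr (\<alpha> - 1) * p \<le> F + (\<alpha> - 1) * t powr \<alpha> * q"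
      using F t al q by (subst (asm) ennreal_le_iff) auto
    moreover have "\<alpha> * t powr (\<alpha> - 1) * p = \<alpha> * t powr \<alpha> * q"
      using t by (simp add: pt powr_diff field_simps)
    ultimately have "\<alpha> * (t powr \<alpha> * q) \<le> F + (\<alpha> - 1) * (t powr \<alpha> * q)" using al by (auto simp: mult.assoc)
    then have "t powr \<alpha> * q \<le> F" by (simp add: left_diff_distrib)
    then show ?thesis using F key by simp
  qed
qed



lemma shift_normal:
  assumes A: "A \<in> sets borel"
  shows "(\<integral>\<^sup>+t. ennreal (normal_density 0 s t) * indicator A (c + t) \<partial>lborel)
       = (\<integral>\<^sup>+z. ennreal (normal_density c s z) * indicator A z \<partial>lborel)"
proof -
  have "(\<integral>\<^sup>+z. ennreal (normal_density c s z) * indicator A z \<partial>lborel)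
      = (\<integral>\<^sup>+z. ennreal (normal_density c s z) * indicator A z \<partial>(distr lborel borel ((+) c)))"
    by (simp add: lborel_distr_plus)
  also have "\<dots> = (\<integral>\<^sup>+t. ennreal (normal_density c s (c + t)) * indicator A (c + t) \<partial>lborel)"
    using A by (subst nn_integral_distr) (auto simp: normal_density_def)
  also have "\<dots> = (\<integral>\<^sup>+t. ennreal (normal_density 0 s t) * indicator A (c + t) \<partial>lborel)"
    by (simp add: normal_density_def)
  finally show ?thesis ..
qed

lemma gauss_conv:
  fixes M1 :: "'a measure" and M2 :: "'b measure" and PN :: "'c measure"
    and G :: "'a \<times> 'b \<Rightarrow> real" and W :: "'c \<Rightarrow> real"
  assumes P1: "prob_space M1" and P2: "prob_space M2" and PN: "prob_space PN"
    and G[measurable]: "G \<in> borel_measurable (M1 \<Otimes>\<^sub>M M2)"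
    and W[measurable]: "W \<in> borel_measurable PN"
    and D: "distr PN borel W = density lborel (normal_density 0 s)"
  shows "distr (M1 \<Otimes>\<^sub>M (M2 \<Otimes>\<^sub>M PN)) borel (\<lambda>(x, r, n). G (x, r) + W n)
       = density lborel (\<lambda>z. \<integral>\<^sup>+p. ennreal (normal_density (G p) s z) \<partial>(M1 \<Otimes>\<^sub>M M2))"
proof (rule measure_eqI)
  interpret M1: prob_space M1 by fact
  interpret M2: prob_space M2 by fact
  interpret PN: prob_space PN by fact
  interpret M12: prob_space "M1 \<Otimes>\<^sub>M M2" by (intro prob_space_pair P1 P2)
  interpret M2N: prob_space "M2 \<Otimes>\<^sub>M PN" by (intro prob_space_pair P2 PN)
  interpret L: pair_sigma_finite "M1 \<Otimes>\<^sub>M M2" lborel ..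
  show "sets (distr (M1 \<Otimes>\<^sub>M (M2 \<Otimes>\<^sub>M PN)) borel (\<lambda>(x, r, n). G (x, r) + W n)) =
        sets (density lborel (\<lambda>z. \<integral>\<^sup>+p. ennreal (normal_density (G p) s z) \<partial>(M1 \<Otimes>\<^sub>M M2)))"
    by simp
  fix A assume "A \<in> sets (distr (M1 \<Otimes>\<^sub>M (M2 \<Otimes>\<^sub>M PN)) borel (\<lambda>(x, r, n). G (x, r) + W n))"
  then have A[measurable]: "A \<in> sets borel" by simp
  have Gm[measurable]: "(\<lambda>(x, r, n). G (x, r) + W n) \<in> borel_measurable (M1 \<Otimes>\<^sub>M (M2 \<Otimes>\<^sub>M PN))"
    by measurable
  have inner: "(\<integral>\<^sup>+n. indicator A (c + W n) \<partial>PN) = (\<integral>\<^sup>+z. ennreal (normal_density c s z) * indicator A z \<partial>lborel)" for c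
  proof -
    have "(\<integral>\<^sup>+n. indicator A (c + W n) \<partial>PN) = (\<integral>\<^sup>+t. indicator A (c + t) \<partial>distr PN borel W)"
      by (subst nn_integral_distr) auto
    also have "\<dots> = (\<integral>\<^sup>+t. ennreal (normal_density 0 s t) * indicator A (c + t) \<partial>lborel)"
      unfolding D by (subst nn_integral_density) auto
    finally show ?thesis using shift_normal[OF A] by simp
  qed
  have "emeasure (distr (M1 \<Otimes>\<^sub>M (M2 \<Otimes>\<^sub>M PN)) borel (\<lambda>(x, r, n). G (x, r) + W n)) A
      = (\<integral>\<^sup>+w. indicator A ((\<lambda>(x, r, n). G (x, r) + W n) w) \<partial>(M1 \<Otimes>\<^sub>M (M2 \<Otimes>\<^sub>M PN)))"
  proof -
    have "emeasure (distr (M1 \<Otimes>\<^sub>M (M2 \<Otimes>\<^sub>M PN)) borel (\<lambda>(x, r, n). G (x, r) + W n)) A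
       = (\<integral>\<^sup>+z. indicator A z \<partial>distr (M1 \<Otimes>\<^sub>M (M2 \<Otimes>\<^sub>M PN)) borel (\<lambda>(x, r, n). G (x, r) + W n))"
      by (rule nn_integral_indicator[symmetric]) simp
    also have "\<dots> = (\<integral>\<^sup>+w. indicator A ((\<lambda>(x, r, n). G (x, r) + W n) w) \<partial>(M1 \<Otimes>\<^sub>M (M2 \<Otimes>\<^sub>M PN)))"
      by (rule nn_integral_distr[OF Gm]) simp
    finally show ?thesis .
  qed
  also have "\<dots> = (\<integral>\<^sup>+x. \<integral>\<^sup>+rn. indicator A (G (x, fst rn) + W (snd rn)) \<partial>(M2 \<Otimes>\<^sub>M PN) \<partial>M1)"
    by (subst M2N.nn_integral_fst[symmetric]) (auto simp: case_prod_beta)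
  also have "\<dots> = (\<integral>\<^sup>+x. \<integral>\<^sup>+r. \<integral>\<^sup>+n. indicator A (G (x, r) + W n) \<partial>PN \<partial>M2 \<partial>M1)"
    by (intro nn_integral_cong, subst PN.nn_integral_fst[symmetric]) auto
  also have "\<dots> = (\<integral>\<^sup>+x. \<integral>\<^sup>+r. \<integral>\<^sup>+z. ennreal (normal_density (G (x, r)) s z) * indicator A z \<partial>lborel \<partial>M2 \<partial>M1)"
    by (simp add: inner)
  also have "\<dots> = (\<integral>\<^sup>+p. \<integral>\<^sup>+z. ennreal (normal_density (G p) s z) * indicator A z \<partial>lborel \<partial>(M1 \<Otimes>\<^sub>M M2))"
    by (subst M2.nn_integral_fst[symmetric]) (auto simp: normal_density_def)
  also have "\<dots> = (\<integral>\<^sup>+z. \<integral>\<^sup>+p. ennreal (normal_density (G p) s z) * indicator A z \<partial>(M1 \<Otimes>\<^sub>M M2) \<partial>lborel)"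
    by (subst L.Fubini') (auto simp: normal_density_def)
  also have "\<dots> = (\<integral>\<^sup>+z. (\<integral>\<^sup>+p. ennreal (normal_density (G p) s z) \<partial>(M1 \<Otimes>\<^sub>M M2)) * indicator A z \<partial>lborel)"
    by (intro nn_integral_cong nn_integral_multc) (auto simp: normal_density_def)
  also have "\<dots> = emeasure (density lborel (\<lambda>z. \<integral>\<^sup>+p. ennreal (normal_density (G p) s z) \<partial>(M1 \<Otimes>\<^sub>M M2))) A"
    by (subst emeasure_density) (auto simp: normal_density_def)
  finally show "emeasure (distr (M1 \<Otimes>\<^sub>M (M2 \<Otimes>\<^sub>M PN)) borel (\<lambda>(x, r, n). G (x, r) + W n)) A
      = emeasure (density lborel (\<lambda>z. \<integral>\<^sup>+p. ennreal (normal_density (G p) s z) \<partial>(M1 \<Otimes>\<^sub>M M2))) A" .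
qed



lemma int_couple_fst:
  assumes P1: "prob_space M1" and P2: "prob_space M2" and P3: "prob_space M3"
    and F[measurable]: "F \<in> borel_measurable (M1 \<Otimes>\<^sub>M M3)"
  shows "(\<integral>\<^sup>+w. F (fst (fst w), snd w) \<partial>((M1 \<Otimes>\<^sub>M M2) \<Otimes>\<^sub>M M3)) = (\<integral>\<^sup>+p. F p \<partial>(M1 \<Otimes>\<^sub>M M3))"
proof -
  interpret M1: prob_space M1 by fact
  interpret M2: prob_space M2 by fact
  interpret M3: prob_space M3 by fact
  have "(\<integral>\<^sup>+w. F (fst (fst w), snd w) \<partial>((M1 \<Otimes>\<^sub>M M2) \<Otimes>\<^sub>M M3))
      = (\<integral>\<^sup>+xx. \<integral>\<^sup>+r. F (fst xx, r) \<partial>M3 \<partial>(M1 \<Otimes>\<^sub>M M2))"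
    by (subst M3.nn_integral_fst[symmetric]) auto
  also have "\<dots> = (\<integral>\<^sup>+x. \<integral>\<^sup>+x'. \<integral>\<^sup>+r. F (x, r) \<partial>M3 \<partial>M2 \<partial>M1)"
    by (subst M2.nn_integral_fst[symmetric]) auto
  also have "\<dots> = (\<integral>\<^sup>+x. \<integral>\<^sup>+r. F (x, r) \<partial>M3 \<partial>M1)"
    by (simp add: M2.emeasure_space_1)
  also have "\<dots> = (\<integral>\<^sup>+p. F p \<partial>(M1 \<Otimes>\<^sub>M M3))"
    by (subst M3.nn_integral_fst[symmetric]) auto
  finally show ?thesis .
qed

lemma int_couple_snd:
  assumes P1: "prob_space M1" and P2: "prob_space M2" and P3: "prob_space M3"
    and F[measurable]: "F \<in> borel_measurable (M2 \<Otimes>\<^sub>M M3)"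
  shows "(\<integral>\<^sup>+w. F (snd (fst w), snd w) \<partial>((M1 \<Otimes>\<^sub>M M2) \<Otimes>\<^sub>M M3)) = (\<integral>\<^sup>+p. F p \<partial>(M2 \<Otimes>\<^sub>M M3))"
proof -
  interpret M1: prob_space M1 by fact
  interpret M2: prob_space M2 by fact
  interpret M3: prob_space M3 by fact
  have "(\<integral>\<^sup>+w. F (snd (fst w), snd w) \<partial>((M1 \<Otimes>\<^sub>M M2) \<Otimes>\<^sub>M M3))
      = (\<integral>\<^sup>+xx. \<integral>\<^sup>+r. F (snd xx, r) \<partial>M3 \<partial>(M1 \<Otimes>\<^sub>M M2))"
    by (subst M3.nn_integral_fst[symmetric]) auto
  also have "\<dots> = (\<integral>\<^sup>+x. \<integral>\<^sup>+x'. \<integral>\<^sup>+r. F (x', r) \<partial>M3 \<partial>M2 \<partial>M1)"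
    by (subst M2.nn_integral_fst[symmetric]) auto
  also have "\<dots> = (\<integral>\<^sup>+x'. \<integral>\<^sup>+r. F (x', r) \<partial>M3 \<partial>M2)"
    by (simp add: M1.emeasure_space_1)
  also have "\<dots> = (\<integral>\<^sup>+p. F p \<partial>(M2 \<Otimes>\<^sub>M M3))"
    by (subst M3.nn_integral_fst[symmetric]) auto
  finally show ?thesis .
qed

lemma nd_mix_pos_fin:
  assumes P: "prob_space M" and a[measurable]: "a \<in> borel_measurable M" and s: "0 < s"
  shows "0 < (\<integral>\<^sup>+w. ennreal (normal_density (a w) s z) \<partial>M)"
    and "(\<integral>\<^sup>+w. ennreal (normal_density (a w) s z) \<partial>M) < \<infinity>"
proof -
  interpret prob_space M by fact
  have m: "(\<lambda>w. ennreal (normal_density (a w) s z)) \<in> borel_measurable M"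
    by (simp add: normal_density_def)
  show "0 < (\<integral>\<^sup>+w. ennreal (normal_density (a w) s z) \<partial>M)"
  proof (rule ccontr)
    assume "\<not> ?thesis"
    then have "(\<integral>\<^sup>+w. ennreal (normal_density (a w) s z) \<partial>M) = 0" by (simp add: not_less)
    then have "AE w in M. ennreal (normal_density (a w) s z) = 0"
      using nn_integral_0_iff_AE[OF m] by simp
    then have "AE w in M. False"
      using normal_density_pos[OF s] by (auto elim!: AE_mp intro!: AE_I2 simp: less_le)
    then show False using AE_False by simp
  qed
  have "(\<integral>\<^sup>+w. ennreal (normal_density (a w) s z) \<partial>M) \<le> (\<integral>\<^sup>+w. ennreal (1 / sqrt (2 * pi * s\<^sup>2)) \<partial>M)"
  proof (intro nn_integral_mono ennreal_leI)
    fix w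
    have "exp (-(z - a w)\<^sup>2 / (2 * s\<^sup>2)) \<le> 1" by simp
    then show "normal_density (a w) s z \<le> 1 / sqrt (2 * pi * s\<^sup>2)"
      unfolding normal_density_def by (intro mult_left_le) auto
  qed
  also have "\<dots> < \<infinity>" by (simp add: emeasure_space_1)
  finally show "(\<integral>\<^sup>+w. ennreal (normal_density (a w) s z) \<partial>M) < \<infinity>" .
qed

lemma prod_coupling:
  assumes "prob_space M" "prob_space N"
  shows "M \<Otimes>\<^sub>M N \<in> couplings M N"
proof -
  interpret M: prob_space M by fact
  interpret N: prob_space N by fact
  have "distr (M \<Otimes>\<^sub>M N) N snd = N"
  proof (intro measure_eqI)
    fix A assume A: "A \<in> sets (distr (M \<Otimes>\<^sub>M N) N snd)"
    from A have "emeasure (distr (M \<Otimes>\<^sub>M N) N snd) A = emeasure (M \<Otimes>\<^sub>M N) (space M \<times> A)"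
      by (auto simp add: emeasure_distr space_pair_measure dest: sets.sets_into_space intro!: arg_cong2[where f=emeasure])
    with A show "emeasure (distr (M \<Otimes>\<^sub>M N) N snd) A = emeasure N A"
      by (simp add: N.emeasure_pair_measure_Times M.emeasure_space_1)
  qed simp
  moreover have "distr (M \<Otimes>\<^sub>M N) M fst = M" by (rule N.distr_pair_fst)
  ultimately show ?thesis using assms unfolding couplings_def by (auto intro: prob_space_pair)
qed



theorem lemma2:
  fixes \<Theta> :: "'th set" and Q :: "('s \<times> 's) set"
    and prior :: "'th \<Rightarrow> 's \<Rightarrow> real" and mu :: "'th \<Rightarrow> 's \<Rightarrow> 'x measure"
    and MX :: "'x measure" and Hist :: "'h set" and PR :: "'r measure"
    and f :: "'x \<Rightarrow> 'h \<Rightarrow> 'r \<Rightarrow> real^'d" and u :: "nat \<Rightarrow> real^'d"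
    and m l :: nat and h :: "nat \<Rightarrow> real"
    and PN :: "(real^'d) measure" and \<Sigma> :: "real^'d^'d"
    and \<alpha> :: real and \<theta> :: 'th and si sj :: 's and y :: 'h
  assumes mu_prob: "\<And>\<theta> s. \<theta> \<in> \<Theta> \<Longrightarrow> 0 < prior \<theta> s \<Longrightarrow>
                       prob_space (mu \<theta> s) \<and> sets (mu \<theta> s) = sets MX"
    and PR_prob: "prob_space PR"
    and f_meas: "\<And>y. y \<in> Hist \<Longrightarrow> (\<lambda>(x, r). f x y r) \<in> borel_measurable (MX \<Otimes>\<^sub>M PR)"
    and u_sphere: "\<And>i. i < m \<Longrightarrow> norm (u i) = 1"
    and l_idx: "l < m"
    and HUC: "is_HUC \<Theta> Q prior mu Hist PR f u m h"
    and Sigma_sym: "transpose \<Sigma> = \<Sigma>"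
    and Sigma_psd: "\<And>w. 0 \<le> w \<bullet> (\<Sigma> *v w)"
    and PN_gauss: "gaussian_vec PN \<Sigma>"
    and v_pos: "0 < u l \<bullet> (\<Sigma> *v u l)"
    and alpha: "1 < \<alpha>"
    and theta: "\<theta> \<in> \<Theta>"
    and pair: "(si, sj) \<in> Q"
    and prior_pos: "0 < prior \<theta> si" "0 < prior \<theta> sj"
    and hist: "y \<in> Hist"
  shows "renyi_div \<alpha>
           (distr (mu \<theta> si \<Otimes>\<^sub>M (PR \<Otimes>\<^sub>M PN)) borel (\<lambda>(x, r, n). (f x y r + n) \<bullet> u l))
           (distr (mu \<theta> sj \<Otimes>\<^sub>M (PR \<Otimes>\<^sub>M PN)) borel (\<lambda>(x, r, n). (f x y r + n) \<bullet> u l))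
         \<le> ereal (\<alpha> / 2 * (h l / (u l \<bullet> (\<Sigma> *v u l))))"
proof -
  define v where "v = u l \<bullet> (\<Sigma> *v u l)"
  define s where "s = sqrt v"
  have v: "0 < v" using v_pos by (simp add: v_def)
  have s: "0 < s" and s2: "s\<^sup>2 = v" using v by (auto simp: s_def)
  define Mi where "Mi = mu \<theta> si"
  define Mj where "Mj = mu \<theta> sj"
  have Pi: "prob_space Mi" and Si: "sets Mi = sets MX"
    using mu_prob[OF theta prior_pos(1)] by (auto simp: Mi_def)
  have Pj: "prob_space Mj" and Sj: "sets Mj = sets MX"
    using mu_prob[OF theta prior_pos(2)] by (auto simp: Mj_def)
  have PNp: "prob_space PN" and PNs: "sets PN = sets borel"
    and D: "distr PN borel (\<lambda>x. x \<bullet> u l) = density lborel (normal_density 0 s)"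
    using PN_gauss v unfolding gaussian_vec_def by (auto simp: s_def v_def)
  define g where "g = (\<lambda>p. (case p of (x, r) \<Rightarrow> f x y r) \<bullet> u l)"
  have gm: "g \<in> borel_measurable (MX \<Otimes>\<^sub>M PR)"
    unfolding g_def using f_meas[OF hist] by measurable
  have gM: "g \<in> borel_measurable (M \<Otimes>\<^sub>M PR)" if "sets M = sets MX" for M :: "'x measure"
    proof -
    have "(borel_measurable (M \<Otimes>\<^sub>M PR) :: ('x \<times> 'r \<Rightarrow> real) set) = borel_measurable (MX \<Otimes>\<^sub>M PR)"
      by (rule measurable_cong_sets) (simp_all add: sets_pair_measure_cong[OF that refl])
    then show ?thesis using gm by simp
  qed
  have law: "distr (M \<Otimes>\<^sub>M (PR \<Otimes>\<^sub>M PN)) borel (\<lambda>(x, r, n). (f x y r + n) \<bullet> u l)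
      = density lborel (\<lambda>z. \<integral>\<^sup>+p. ennreal (normal_density (g p) s z) \<partial>(M \<Otimes>\<^sub>M PR))"
    if "prob_space M" "sets M = sets MX" for M :: "'x measure"
  proof -
    have "distr (M \<Otimes>\<^sub>M (PR \<Otimes>\<^sub>M PN)) borel (\<lambda>(x, r, n). (f x y r + n) \<bullet> u l)
        = distr (M \<Otimes>\<^sub>M (PR \<Otimes>\<^sub>M PN)) borel (\<lambda>(x, r, n). g (x, r) + (\<lambda>n. n \<bullet> u l) n)"
      by (intro distr_cong) (auto simp: g_def inner_add_left)
    also have "\<dots> = density lborel (\<lambda>z. \<integral>\<^sup>+p. ennreal (normal_density (g p) s z) \<partial>(M \<Otimes>\<^sub>M PR))"
      by (rule gauss_conv[OF that(1) PR_prob PNp gM[OF that(2)] _ D])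
         (simp add: measurable_cong_sets[OF PNs refl])
    finally show ?thesis .
  qed
  interpret Mi: prob_space Mi by (rule Pi)
  interpret Mj: prob_space Mj by (rule Pj)
  interpret PR: prob_space PR by (rule PR_prob)
  define C where "C = (Mi \<Otimes>\<^sub>M Mj) \<Otimes>\<^sub>M PR"
  interpret C: prob_space C unfolding C_def by (intro prob_space_pair Pi Pj PR_prob)
  interpret CL: pair_sigma_finite C lborel ..
  have gi[measurable]: "g \<in> borel_measurable (Mi \<Otimes>\<^sub>M PR)" by (rule gM[OF Si])
  have gj[measurable]: "g \<in> borel_measurable (Mj \<Otimes>\<^sub>M PR)" by (rule gM[OF Sj])
  define a where "a = (\<lambda>w :: ('x \<times> 'x) \<times> 'r. g (fst (fst w), snd w))"
  define b where "b = (\<lambda>w :: ('x \<times> 'x) \<times> 'r. g (snd (fst w), snd w))"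
  have am[measurable]: "a \<in> borel_measurable C" unfolding a_def C_def by measurable
  have bm[measurable]: "b \<in> borel_measurable C" unfolding b_def C_def by measurable
  define pi where "pi = (\<lambda>z. \<integral>\<^sup>+w. ennreal (normal_density (a w) s z) \<partial>C)"
  define pj where "pj = (\<lambda>z. \<integral>\<^sup>+w. ennreal (normal_density (b w) s z) \<partial>C)"
  have pi_eq: "(\<lambda>z. \<integral>\<^sup>+p. ennreal (normal_density (g p) s z) \<partial>(Mi \<Otimes>\<^sub>M PR)) = pi"
  proof
    fix z
    show "(\<integral>\<^sup>+p. ennreal (normal_density (g p) s z) \<partial>(Mi \<Otimes>\<^sub>M PR)) = pi z"
      unfolding pi_def a_def C_def
      by (rule int_couple_fst[OF Pi Pj PR_prob, symmetric]) (simp add: normal_density_def)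
  qed
  have pj_eq: "(\<lambda>z. \<integral>\<^sup>+p. ennreal (normal_density (g p) s z) \<partial>(Mj \<Otimes>\<^sub>M PR)) = pj"
  proof
    fix z
    show "(\<integral>\<^sup>+p. ennreal (normal_density (g p) s z) \<partial>(Mj \<Otimes>\<^sub>M PR)) = pj z"
      unfolding pj_def b_def C_def
      by (rule int_couple_snd[OF Pi Pj PR_prob, symmetric]) (simp add: normal_density_def)
  qed
  define qi where "qi = (\<lambda>z. enn2real (pi z))"
  define qj where "qj = (\<lambda>z. enn2real (pj z))"
  have pi_q: "pi z = ennreal (qi z)" and qi_pos: "0 < qi z" for z
    using nd_mix_pos_fin[OF C.prob_space_axioms am s, of z]
    by (auto simp: qi_def pi_def enn2real_positive_iff)
  have pj_q: "pj z = ennreal (qj z)" and qj_pos: "0 < qj z" for z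
    using nd_mix_pos_fin[OF C.prob_space_axioms bm s, of z]
    by (auto simp: qj_def pj_def enn2real_positive_iff)
  have pim[measurable]: "pi \<in> borel_measurable borel"
    unfolding pi_def by (measurable; simp add: normal_density_def)
  have pjm[measurable]: "pj \<in> borel_measurable borel"
    unfolding pj_def by (measurable; simp add: normal_density_def)
  have qim[measurable]: "qi \<in> borel_measurable borel" unfolding qi_def by measurable
  have qjm[measurable]: "qj \<in> borel_measurable borel" unfolding qj_def by measurable
  define LI where "LI = distr (mu \<theta> si \<Otimes>\<^sub>M (PR \<Otimes>\<^sub>M PN)) borel (\<lambda>(x, r, n). (f x y r + n) \<bullet> u l)"
  define LJ where "LJ = distr (mu \<theta> sj \<Otimes>\<^sub>M (PR \<Otimes>\<^sub>M PN)) borel (\<lambda>(x, r, n). (f x y r + n) \<bullet> u l)"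
  have LI: "LI = density lborel (\<lambda>z. ennreal (qi z))"
    unfolding LI_def Mi_def[symmetric] law[OF Pi Si] pi_eq pi_q ..
  have LJ: "LJ = density lborel (\<lambda>z. ennreal (qj z))"
    unfolding LJ_def Mj_def[symmetric] law[OF Pj Sj] pj_eq pj_q ..
  have sfJ: "sigma_finite_measure LJ"
    unfolding LJ by (subst sigma_finite_measure.sigma_finite_iff_density_finite[OF lborel.sigma_finite_measure_axioms]) auto
  have rm: "(\<lambda>z. ennreal (qi z / qj z)) \<in> borel_measurable LJ"
    unfolding LJ by measurable
  have LIJ: "density LJ (\<lambda>z. ennreal (qi z / qj z)) = LI"
    unfolding LJ LI
  proof (subst density_density_eq)
    show "density lborel (\<lambda>x. ennreal (qj x) * ennreal (qi x / qj x)) = density lborel (\<lambda>z. ennreal (qi z))"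
      using qj_pos by (intro arg_cong[where f="density lborel"] ext) (simp add: ennreal_mult'[symmetric] less_imp_le, metis less_irrefl)
  qed auto
  have RN: "AE z in LJ. ennreal (qi z / qj z) = RN_deriv LJ LI z"
    by (rule sigma_finite_measure.RN_deriv_unique[OF sfJ rm LIJ])
  have ac: "absolutely_continuous LJ LI"
    unfolding LIJ[symmetric] by (rule absolutely_continuousI_density[OF rm])
  have sets_eq: "sets LI = sets LJ" by (simp add: LI LJ)
  have I_eq: "(\<integral>\<^sup>+z. ennreal ((enn2real (RN_deriv LJ LI z)) powr \<alpha>) \<partial>LJ)
      = (\<integral>\<^sup>+z. ennreal (qi z powr \<alpha> * qj z powr (1 - \<alpha>)) \<partial>lborel)"
  proof -
    have "(\<integral>\<^sup>+z. ennreal ((enn2real (RN_deriv LJ LI z)) powr \<alpha>) \<partial>LJ)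
        = (\<integral>\<^sup>+z. ennreal ((qi z / qj z) powr \<alpha>) \<partial>LJ)"
    proof (rule nn_integral_cong_AE)
      show "AE z in LJ. ennreal ((enn2real (RN_deriv LJ LI z)) powr \<alpha>) = ennreal ((qi z / qj z) powr \<alpha>)"
        using RN
      proof (rule AE_mp, intro AE_I2 impI)
        fix z assume "ennreal (qi z / qj z) = RN_deriv LJ LI z"
        then have "enn2real (RN_deriv LJ LI z) = qi z / qj z"
          using qi_pos[of z] qj_pos[of z] by (metis enn2real_ennreal less_imp_le divide_nonneg_pos)
        then show "ennreal ((enn2real (RN_deriv LJ LI z)) powr \<alpha>) = ennreal ((qi z / qj z) powr \<alpha>)" by simp
      qed
    qed
    also have "\<dots> = (\<integral>\<^sup>+z. ennreal (qj z) * ennreal ((qi z / qj z) powr \<alpha>) \<partial>lborel)"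
      unfolding LJ by (rule nn_integral_density) auto
    also have "\<dots> = (\<integral>\<^sup>+z. ennreal (qi z powr \<alpha> * qj z powr (1 - \<alpha>)) \<partial>lborel)"
    proof (intro nn_integral_cong)
      fix z
      have "qj z * (qi z / qj z) powr \<alpha> = qi z powr \<alpha> * qj z powr (1 - \<alpha>)"
        using qi_pos[of z] qj_pos[of z] by (simp add: powr_divide powr_diff field_simps)
      then show "ennreal (qj z) * ennreal ((qi z / qj z) powr \<alpha>) = ennreal (qi z powr \<alpha> * qj z powr (1 - \<alpha>))"
        using qj_pos[of z] by (simp add: ennreal_mult'[symmetric] less_imp_le)
    qed
    finally show ?thesis .
  qed
  have bound_z: "ennreal (qi z powr \<alpha> * qj z powr (1 - \<alpha>))
      \<le> (\<integral>\<^sup>+w. ennreal (normal_density (a w) s z powr \<alpha> * normal_density (b w) s z powr (1 - \<alpha>)) \<partial>C)" for z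
  proof (rule mix_convex[where p = "qi z" and q = "qj z"])
    show "(\<lambda>w. normal_density (a w) s z) \<in> borel_measurable C" by (simp add: normal_density_def)
    show "(\<lambda>w. normal_density (b w) s z) \<in> borel_measurable C" by (simp add: normal_density_def)
    show "(\<integral>\<^sup>+w. ennreal (normal_density (a w) s z) \<partial>C) = ennreal (qi z)"
      using pi_q[of z] by (simp add: pi_def)
    show "(\<integral>\<^sup>+w. ennreal (normal_density (b w) s z) \<partial>C) = ennreal (qj z)"
      using pj_q[of z] by (simp add: pj_def)
  qed (use normal_density_pos[OF s] alpha qi_pos qj_pos in auto)
  have hUC: "0 \<le> h l" and H: "AE w in (Mi \<Otimes>\<^sub>M Mj) \<Otimes>\<^sub>M PR. \<forall>l<m.
             \<bar>(f (fst (fst w)) y (snd w) - f (snd (fst w)) y (snd w)) \<bullet> u l\<bar> \<le> sqrt (h l)"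
  proof -
    have all: "\<forall>\<theta>\<in>\<Theta>. \<forall>(si, sj)\<in>Q. 0 < prior \<theta> si \<longrightarrow> 0 < prior \<theta> sj \<longrightarrow>
        (\<forall>y\<in>Hist. \<forall>\<gamma>\<in>couplings (mu \<theta> si) (mu \<theta> sj).
           AE z in \<gamma> \<Otimes>\<^sub>M PR. \<forall>l<m.
             \<bar>(f (fst (fst z)) y (snd z) - f (snd (fst z)) y (snd z)) \<bullet> u l\<bar> \<le> sqrt (h l))"
      using HUC unfolding is_HUC_def by (rule conjunct2)
    have hh: "\<forall>l<m. 0 \<le> h l"
      using HUC unfolding is_HUC_def by (rule conjunct1)
    show "0 \<le> h l" using hh l_idx by simp
    from all theta have A1: "\<forall>(si, sj)\<in>Q. 0 < prior \<theta> si \<longrightarrow> 0 < prior \<theta> sj \<longrightarrow>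
        (\<forall>y\<in>Hist. \<forall>\<gamma>\<in>couplings (mu \<theta> si) (mu \<theta> sj).
           AE z in \<gamma> \<Otimes>\<^sub>M PR. \<forall>l<m.
             \<bar>(f (fst (fst z)) y (snd z) - f (snd (fst z)) y (snd z)) \<bullet> u l\<bar> \<le> sqrt (h l))"
      by (rule bspec)
    from A1 pair have A2: "case (si, sj) of (si, sj) \<Rightarrow> 0 < prior \<theta> si \<longrightarrow> 0 < prior \<theta> sj \<longrightarrow>
        (\<forall>y\<in>Hist. \<forall>\<gamma>\<in>couplings (mu \<theta> si) (mu \<theta> sj).
           AE z in \<gamma> \<Otimes>\<^sub>M PR. \<forall>l<m.
             \<bar>(f (fst (fst z)) y (snd z) - f (snd (fst z)) y (snd z)) \<bullet> u l\<bar> \<le> sqrt (h l))"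
      by (rule bspec)
    then have A3: "\<forall>y\<in>Hist. \<forall>\<gamma>\<in>couplings Mi Mj.
           AE z in \<gamma> \<Otimes>\<^sub>M PR. \<forall>l<m.
             \<bar>(f (fst (fst z)) y (snd z) - f (snd (fst z)) y (snd z)) \<bullet> u l\<bar> \<le> sqrt (h l)"
      using prior_pos unfolding Mi_def Mj_def by simp
    have A4: "\<forall>\<gamma>\<in>couplings Mi Mj.
           AE z in \<gamma> \<Otimes>\<^sub>M PR. \<forall>l<m.
             \<bar>(f (fst (fst z)) y (snd z) - f (snd (fst z)) y (snd z)) \<bullet> u l\<bar> \<le> sqrt (h l)"
      using A3 hist by (rule bspec)
    show "AE w in (Mi \<Otimes>\<^sub>M Mj) \<Otimes>\<^sub>M PR. \<forall>l<m.
             \<bar>(f (fst (fst w)) y (snd w) - f (snd (fst w)) y (snd w)) \<bullet> u l\<bar> \<le> sqrt (h l)"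
      using A4 prod_coupling[OF Pi Pj] by (rule bspec)
  qed
  have AEh: "AE w in C. (a w - b w)\<^sup>2 \<le> h l"
    using H unfolding C_def[symmetric]
  proof (rule AE_mp, intro AE_I2 impI)
    fix w assume "\<forall>l<m. \<bar>(f (fst (fst w)) y (snd w) - f (snd (fst w)) y (snd w)) \<bullet> u l\<bar> \<le> sqrt (h l)"
    then have d: "\<bar>a w - b w\<bar> \<le> sqrt (h l)"
      using l_idx by (simp add: a_def b_def g_def inner_diff_left)
    have "\<bar>a w - b w\<bar>\<^sup>2 \<le> (sqrt (h l))\<^sup>2"
      using d by (intro power_mono) auto
    then show "(a w - b w)\<^sup>2 \<le> h l" using hUC by simp
  qed
  define E where "E = exp (\<alpha> * (\<alpha> - 1) * h l / (2 * v))"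
  have Ibound: "(\<integral>\<^sup>+z. ennreal (qi z powr \<alpha> * qj z powr (1 - \<alpha>)) \<partial>lborel) \<le> ennreal E"
  proof -
    have "(\<integral>\<^sup>+z. ennreal (qi z powr \<alpha> * qj z powr (1 - \<alpha>)) \<partial>lborel)
        \<le> (\<integral>\<^sup>+z. \<integral>\<^sup>+w. ennreal (normal_density (a w) s z powr \<alpha> * normal_density (b w) s z powr (1 - \<alpha>)) \<partial>C \<partial>lborel)"
      by (intro nn_integral_mono bound_z)
    also have "\<dots> = (\<integral>\<^sup>+w. \<integral>\<^sup>+z. ennreal (normal_density (a w) s z powr \<alpha> * normal_density (b w) s z powr (1 - \<alpha>)) \<partial>lborel \<partial>C)"
      by (rule CL.Fubini') (simp add: normal_density_def)
    also have "\<dots> = (\<integral>\<^sup>+w. ennreal (exp (\<alpha> * (\<alpha> - 1) * (a w - b w)\<^sup>2 / (2 * s\<^sup>2))) \<partial>C)"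
      by (simp add: gauss_renyi_integral[OF s])
    also have "\<dots> \<le> (\<integral>\<^sup>+w. ennreal E \<partial>C)"
    proof (rule nn_integral_mono_AE)
      show "AE w in C. ennreal (exp (\<alpha> * (\<alpha> - 1) * (a w - b w)\<^sup>2 / (2 * s\<^sup>2))) \<le> ennreal E"
        using AEh
      proof (rule AE_mp, intro AE_I2 impI)
        fix w assume hw: "(a w - b w)\<^sup>2 \<le> h l"
        have "\<alpha> * (\<alpha> - 1) * (a w - b w)\<^sup>2 \<le> \<alpha> * (\<alpha> - 1) * h l"
          using hw alpha by (intro mult_left_mono) auto
        then have "\<alpha> * (\<alpha> - 1) * (a w - b w)\<^sup>2 / (2 * s\<^sup>2) \<le> \<alpha> * (\<alpha> - 1) * h l / (2 * v)"
          using s2 v by (simp add: divide_right_mono)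
        then show "ennreal (exp (\<alpha> * (\<alpha> - 1) * (a w - b w)\<^sup>2 / (2 * s\<^sup>2))) \<le> ennreal E"
          unfolding E_def by (intro ennreal_leI) simp
      qed
    qed
    also have "\<dots> = ennreal E" by (simp add: C.emeasure_space_1)
    finally show ?thesis .
  qed
  have goal_eq: "?thesis \<longleftrightarrow> renyi_div \<alpha> LI LJ \<le> ereal (\<alpha> / 2 * (h l / v))"
    unfolding LI_def LJ_def v_def ..
  define I where "I = (\<integral>\<^sup>+z. ennreal ((enn2real (RN_deriv LJ LI z)) powr \<alpha>) \<partial>LJ)"
  have IE: "I \<le> ennreal E" using Ibound I_eq by (simp add: I_def)
  then have Ifin: "I \<noteq> \<infinity>" by (auto simp: top_unique)
  have ren: "renyi_div \<alpha> LI LJ = ereal (ln (enn2real I) / (\<alpha> - 1))"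
    unfolding renyi_div_def Let_def I_def[symmetric] using ac sets_eq Ifin by (simp only: if_True if_False simp_thms)
  have rhs0: "0 \<le> \<alpha> / 2 * (h l / v)" using alpha hUC v by simp
  have Ir: "enn2real I \<le> E"
  proof -
    have "enn2real I \<le> enn2real (ennreal E)" using IE by (intro enn2real_mono) auto
    then show ?thesis by (simp add: E_def)
  qed
  have "ln (enn2real I) / (\<alpha> - 1) \<le> \<alpha> / 2 * (h l / v)"
  proof (cases "enn2real I = 0")
    case True then show ?thesis using rhs0 by simp
  next
    case False
    then have Ipos: "0 < enn2real I" using enn2real_nonneg[of I] by linarith
    have "ln (enn2real I) \<le> ln E" using Ir Ipos by (intro ln_mono) auto
    also have "\<dots> = (\<alpha> - 1) * (\<alpha> / 2 * (h l / v))" by (simp add: E_def field_simps)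
    finally show ?thesis using alpha by (simp add: divide_le_eq mult.commute)
  qed
  then show ?thesis unfolding goal_eq ren by simp
qed

end
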